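(* Let $n\ge2$ and $r\in\{1,\dots,n-1\}$. If $C\subseteq\mathbb{F}_q^n$ is drawn uniformly at random from the set of linear codes of dimension $n-r$ that contain the all-ones vector $\mathbf{1}\in\mathbb{F}_q^n$, then $C$ has property $(\ast)$ with probability at least $1-\frac{4q^{-r/64}}{1-q^{-r/64}}$.
   Context: $H_q(x)=x\log_q(q-1)-x\log_qx-(1-x)\log_q(1-x)$ is the $q$-ary entropy function, and $H_q^{-1}$ its inverse on $[0,1-1/q]$. A subspace $V\subseteq\mathbb{F}_q^n$ is $\alpha$-sparse if it is spanned by vectors of Hamming weight at most $\alpha n$. A linear code $C\subseteq\mathbb{F}_q^n$ of dimension $n-r$ has property $(\ast)$ if, with $\alpha=H_q^{-1}(r/8n)$, for every $m\in\{1,\dots,r\}$ and every $\alpha$-sparse $m$-dimensional subspace $V\subseteq\mathbb{F}_q^n$, $\dim(C\cap V)<m/2$. *)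

theory Defs
  imports "HOL-Analysis.Analysis"
begin

definition qentropy :: "real \<Rightarrow> real \<Rightarrow> real" where
  "qentropy q x =
     (if x = 0 then 0 else x * log q (q - 1) - x * log q x)
     - (if x = 1 then 0 else (1 - x) * log q (1 - x))"

definition qentropy_inv :: "real \<Rightarrow> real \<Rightarrow> real" where
  "qentropy_inv q y = (THE x. 0 \<le> x \<and> x \<le> 1 - 1 / q \<and> qentropy q x = y)"

definition hweight :: "'a::zero ^ 'n \<Rightarrow> nat" where
  "hweight v = card {i. v $ i \<noteq> 0}"

definition sparse_subspace :: "real \<Rightarrow> ('a::field ^ 'n) set \<Rightarrow> bool" where
  "sparse_subspace \<alpha> V \<longleftrightarrow>
     (\<exists>S. V = vec.span S \<and> (\<forall>v\<in>S. real (hweight v) \<le> \<alpha> * real CARD('n)))"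

text \<open>Property (*) for a code C of redundancy r (dimension n - r), n = CARD('n).\<close>
definition prop_star :: "nat \<Rightarrow> ('a::{finite,field} ^ 'n) set \<Rightarrow> bool" where
  "prop_star r C \<longleftrightarrow>
     (let \<alpha> = qentropy_inv (real CARD('a)) (real r / (8 * real CARD('n))) in
      \<forall>m \<in> {1..r}. \<forall>V. vec.subspace V \<and> vec.dim V = m \<and> sparse_subspace \<alpha> V
          \<longrightarrow> real (vec.dim (C \<inter> V)) < real m / 2)"

definition codes_with_ones :: "nat \<Rightarrow> ('a::field ^ 'n) set set" where
  "codes_with_ones r =
     {C. vec.subspace C \<and> vec.dim C = CARD('n) - r \<and> (\<chi> i. 1) \<in> C}"

end

theory Submission
  imports Defs "HOL-Real_Asymp.Real_Asymp"
begin

lemma qent_eq: "qentropy q x = x * log q (q-1) - x * log q x - (1-x) * log q (1-x)"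
  unfolding qentropy_def by auto

lemma qent_ge:
  fixes q x :: real
  assumes q: "q \<ge> 2" and x: "0 \<le> x" "x \<le> 1 - 1/q"
  shows "x \<le> qentropy q x"
proof (cases "x = 0")
  case True then show ?thesis by (simp add: qent_eq)
next
  case False
  hence xp: "x > 0" using x by auto
  have x1: "x < 1" using x q by (smt (verit) divide_pos_pos)
  have "log q (1-x) \<le> 0" using x1 xp q by (simp add: log_le_zero_cancel_iff)
  hence A: "(1-x) * log q (1-x) \<le> 0" using x1 by (simp add: mult_nonneg_nonpos)
  have "q \<le> (q-1)/x"
  proof -
    have "x * q \<le> q - 1" using x q by (simp add: field_simps)
    thus ?thesis using xp by (simp add: field_simps)
  qed
  hence "log q q \<le> log q ((q-1)/x)" using q xp by (subst log_le_cancel_iff) auto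
  hence "1 \<le> log q (q-1) - log q x" using q xp by (simp add: log_divide)
  hence "x \<le> x * (log q (q-1) - log q x)" using xp
    by (metis mult.right_neutral mult_left_mono less_imp_le)
  thus ?thesis using A by (simp add: qent_eq algebra_simps)
qed

lemma qent_ln: "qentropy q x = (x*ln(q-1) - x*ln x - (1-x)*ln(1-x))/ln q"
  by (simp add: qent_eq log_def diff_divide_distrib)

lemma xlnx_lim: "((\<lambda>x::real. x * ln x) \<longlongrightarrow> 0) (at_right 0)"
  by real_asymp

lemma qent_deriv:
  fixes q x :: real
  assumes q: "q \<ge> 2" and x: "0 < x" "x < 1"
  shows "(qentropy q has_real_derivative (ln (q-1) - ln x + ln (1-x)) / ln q) (at x)"
proof -
  have e: "qentropy q = (\<lambda>x. (x * ln (q-1) - x * ln x - (1-x) * ln (1-x)) / ln q)"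
    by (rule ext) (simp add: qent_ln)
  have D: "((\<lambda>x. (x * ln (q-1) - x * ln x - (1-x) * ln (1-x)) / ln q) has_real_derivative
        ((1 * ln (q-1) - (1 * ln x + x * (1/x)) - ((-1) * ln (1-x) + (1-x) * (-1/(1-x))))) / ln q) (at x)"
    using x q by (auto intro!: derivative_eq_intros)
  have eq: "((1 * ln (q-1) - (1 * ln x + x * (1/x)) - ((-1) * ln (1-x) + (1-x) * (-1/(1-x))))) / ln q
      = (ln (q-1) - ln x + ln (1-x)) / ln q" using x q by (simp add: divide_simps)
  show ?thesis unfolding e using D by (simp only: eq)
qed

lemma qent_cont:
  fixes q :: real
  assumes q: "q \<ge> 2"
  shows "continuous_on {0..1-1/q} (qentropy q)"
proof -
  have c1: "1 - 1/q < 1" "0 < 1 - 1/q" using q by auto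
  show ?thesis
  proof (clarsimp simp: continuous_on_eq_continuous_within)
    fix x assume x: "0 \<le> x" "x \<le> 1 - 1/q"
    show "continuous (at x within {0..1-1/q}) (qentropy q)"
    proof (cases "x = 0")
      case False
      have "0 < x" using False x by auto
      moreover have "x < 1" using x c1 by linarith
      ultimately have "0 < x" "x < 1" by auto
      from DERIV_isCont[OF qent_deriv[OF q this]]
      show ?thesis by (simp add: continuous_at_imp_continuous_within)
    next
      case True
      have e: "qentropy q = (\<lambda>x. (x * ln (q-1) - x * ln x - (1-x) * ln (1-x)) / ln q)"
        by (rule ext) (simp add: qent_ln)
      have l1: "((\<lambda>x::real. (1-x) * ln (1-x)) \<longlongrightarrow> (1-0) * ln (1-0)) (at_right 0)"
        by (intro tendsto_intros) auto
      have "((\<lambda>x. (x * ln (q-1) - x * ln x - (1-x) * ln (1-x)) / ln q) \<longlongrightarrow>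
             (0 * ln (q-1) - 0 - (1-0) * ln (1-0)) / ln q) (at_right 0)"
        by (intro tendsto_intros xlnx_lim l1) (use q in auto)
      hence "(qentropy q \<longlongrightarrow> qentropy q 0) (at_right 0)"
        by (simp add: e qent_eq)
      thus ?thesis using True c1 by (simp add: continuous_within at_within_Icc_at_right)
    qed
  qed
qed

lemma qent_strict:
  fixes q :: real
  assumes q: "q \<ge> 2" and ab: "0 \<le> a" "a < b" "b \<le> 1 - 1/q"
  shows "qentropy q a < qentropy q b"
proof (rule DERIV_pos_imp_increasing_open[OF ab(2)])
  show "continuous_on {a..b} (qentropy q)"
    by (rule continuous_on_subset[OF qent_cont[OF q]]) (use ab in auto)
next
  fix x assume x: "a < x" "x < b"
  have "1 - 1/q < 1" using q by simp
  hence x0: "0 < x" "x < 1" using x ab by linarith+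
  have "b * q \<le> q - 1" using ab q by (simp add: field_simps)
  moreover have "x * q < b * q" using x q by simp
  ultimately have "x * q < q - 1" by linarith
  hence "x < (q-1) * (1-x)" by (simp add: algebra_simps)
  hence "ln x < ln ((q-1) * (1-x))" using x0 by simp
  hence "0 < ln (q-1) - ln x + ln (1-x)" using x0 q by (simp add: ln_mult)
  hence "0 < (ln (q-1) - ln x + ln (1-x)) / ln q" using q by simp
  thus "\<exists>y. (qentropy q has_real_derivative y) (at x) \<and> 0 < y"
    using qent_deriv[OF q x0] by blast
qed

lemma qent_inv:
  fixes q y :: real
  assumes q: "q \<ge> 2" and y: "0 \<le> y" "y \<le> 1/2"
  shows "0 \<le> qentropy_inv q y \<and> qentropy_inv q y \<le> 1 - 1/q \<and> qentropy q (qentropy_inv q y) = y"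
proof -
  have c: "1/2 \<le> 1 - 1/q" using q by (simp add: field_simps)
  have "1 - 1/q \<le> qentropy q (1 - 1/q)" by (rule qent_ge[OF q]) (use c in auto)
  hence "y \<le> qentropy q (1 - 1/q)" using y c by linarith
  moreover have "qentropy q 0 \<le> y" using y by (simp add: qent_eq)
  moreover have "(0::real) \<le> 1 - 1/q" using c by linarith
  ultimately have "\<exists>x\<ge>0. x \<le> 1 - 1/q \<and> qentropy q x = y"
    by (intro IVT'[OF _ _ _ qent_cont[OF q]])
  then obtain x where x: "0 \<le> x" "x \<le> 1 - 1/q" "qentropy q x = y" by blast
  have "\<exists>!x. 0 \<le> x \<and> x \<le> 1 - 1/q \<and> qentropy q x = y"
  proof (rule ex1I[of _ x])
    fix z assume z: "0 \<le> z \<and> z \<le> 1 - 1/q \<and> qentropy q z = y"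
    show "z = x"
    proof (rule ccontr)
      assume "z \<noteq> x"
      hence "z < x \<or> x < z" by auto
      thus False using qent_strict[OF q] z x by fastforce
    qed
  qed (use x in auto)
  from theI'[OF this] show ?thesis unfolding qentropy_inv_def .
qed

lemma card_field_ge2: "CARD('a::{finite,field}) \<ge> 2"
proof -
  have "card {0::'a, 1} \<le> card (UNIV::'a set)" by (rule card_mono) auto
  thus ?thesis by simp
qed

lemma sum_vec_prod:
  fixes p :: "'a::finite \<Rightarrow> real"
  shows "(\<Sum>v::'a^'n\<in>UNIV. \<Prod>i\<in>UNIV. p (v$i)) = (\<Sum>x\<in>UNIV. p x) ^ CARD('n)"
proof -
  have b: "bij_betw vec_nth (UNIV::('a^'n) set) (UNIV::('n \<Rightarrow> 'a) set)"
    by (intro bij_betwI[of _ _ _ vec_lambda]) (auto simp: vec_eq_iff)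
  have "(\<Sum>v::'a^'n\<in>UNIV. \<Prod>i\<in>UNIV. p (v$i)) = (\<Sum>g\<in>(UNIV::('n \<Rightarrow> 'a) set). \<Prod>i\<in>UNIV. p (g i))"
    using sum.reindex_bij_betw[OF b, of "\<lambda>g. \<Prod>i\<in>UNIV. p (g i)"] by simp
  also have "\<dots> = (\<Prod>i\<in>(UNIV::'n set). \<Sum>x\<in>UNIV. p x)"
    using prod_sum_PiE[of "UNIV::'n set" "\<lambda>_. UNIV::'a set" "\<lambda>_ x. p x"] by (simp add: PiE_UNIV)
  finally show ?thesis by simp
qed

lemma weight_count:
  fixes \<alpha> :: real
  defines "q \<equiv> real CARD('a::{finite,field})"
  assumes a0: "0 < \<alpha>" and a1: "\<alpha> \<le> 1 - 1/q"
  shows "real (card {v::'a^'n. real (hweight v) \<le> \<alpha> * real CARD('n)})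
         \<le> q powr (qentropy q \<alpha> * real CARD('n))"
proof -
  define N where "N = CARD('n)"
  have q2: "q \<ge> 2" unfolding q_def using card_field_ge2[where 'a='a] by simp
  have al1: "\<alpha> < 1" using a1 q2 by (smt (verit) divide_pos_pos)
  define a where "a = \<alpha> / (q - 1)"
  define b where "b = 1 - \<alpha>"
  have apos: "a > 0" unfolding a_def using a0 q2 by simp
  have bpos: "b > 0" unfolding b_def using al1 by simp
  have ab: "a \<le> b"
  proof -
    have "\<alpha> * q \<le> q - 1" using a1 q2 by (simp add: field_simps)
    hence "\<alpha> \<le> (q-1) * (1 - \<alpha>)" by (simp add: algebra_simps)
    thus ?thesis unfolding a_def b_def using q2 by (simp add: field_simps)
  qed
  define p :: "'a \<Rightarrow> real" where "p x = (if x = 0 then b else a)" for x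
  have sp: "(\<Sum>x\<in>UNIV. p x) = 1"
  proof -
    have "(\<Sum>x\<in>UNIV. p x) = p 0 + (\<Sum>x\<in>UNIV - {0}. p x)"
      by (simp add: sum.remove)
    also have "(\<Sum>x\<in>UNIV - {0}. p x) = (\<Sum>x\<in>UNIV - {0::'a}. a)" by (rule sum.cong) (auto simp: p_def)
    also have "\<dots> = (q - 1) * a" unfolding q_def by (simp add: card_Diff_singleton of_nat_diff)
    finally show ?thesis unfolding p_def a_def b_def using q2 by simp
  qed
  have H: "qentropy q \<alpha> * ln q = \<alpha> * ln (q-1) - \<alpha> * ln \<alpha> - (1-\<alpha>) * ln (1-\<alpha>)"
    using q2 by (simp add: qent_ln)
  have key: "1 \<le> (\<Prod>i\<in>UNIV. p (v$i)) * q powr (qentropy q \<alpha> * N)"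
    if v: "real (hweight v) \<le> \<alpha> * N" for v :: "'a^'n"
  proof -
    define S where "S = {i. v$i \<noteq> 0}"
    define w where "w = hweight v"
    have w: "w = card S" unfolding w_def S_def hweight_def ..
    have cS: "card (- S) = N - w" unfolding w N_def by (simp add: Compl_eq_Diff_UNIV card_Diff_subset)
    have wN: "w \<le> N" unfolding w N_def by (rule card_mono) auto
    have e1: "UNIV \<inter> {i. v$i = 0} = -S" "UNIV \<inter> -{i. v$i=0} = S" unfolding S_def by auto
    have "(\<Prod>i\<in>UNIV. p (v$i)) = (\<Prod>i\<in>UNIV. if v$i = 0 then b else a)" by (simp add: p_def)
    also have "\<dots> = b ^ (N - w) * a ^ w"
      by (simp only: prod.If_cases[OF finite[of UNIV]] e1 prod_constant) (simp add: cS w)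
    also have "\<dots> = exp (real (N - w) * ln b + real w * ln a)"
      using apos bpos by (simp add: exp_add exp_of_nat_mult)
    finally have P: "(\<Prod>i\<in>UNIV. p (v$i)) = exp (real (N - w) * ln b + real w * ln a)" .
    have Q: "q powr (qentropy q \<alpha> * N) = exp (N * (qentropy q \<alpha> * ln q))"
      using q2 by (simp add: powr_def mult_ac)
    have "ln a \<le> ln b" using ab apos by simp
    moreover have "real w \<le> \<alpha> * N" using v w_def by simp
    ultimately have P0: "(real w - \<alpha> * N) * (ln a - ln b) \<ge> 0"
      by (simp add: mult_nonpos_nonpos)
    have la: "ln a = ln \<alpha> - ln (q-1)" unfolding a_def using a0 q2 by (simp add: ln_div)
    from P0 have P1: "(real w - \<alpha> * N) * ((ln \<alpha> - ln (q-1)) - ln (1-\<alpha>)) \<ge> 0"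
      unfolding la b_def .
    have "0 \<le> real (N - w) * ln b + real w * ln a + N * (qentropy q \<alpha> * ln q)"
      using P1 wN unfolding H b_def la by (simp add: of_nat_diff algebra_simps)
    hence "1 \<le> exp (real (N - w) * ln b + real w * ln a + N * (qentropy q \<alpha> * ln q))" by simp
    thus ?thesis using P Q by (simp add: exp_add)
  qed
  let ?T = "{v::'a^'n. real (hweight v) \<le> \<alpha> * real CARD('n)}"
  have nn: "0 \<le> (\<Prod>i\<in>UNIV. p (v$i))" for v :: "'a^'n"
    using apos bpos by (intro prod_nonneg) (auto simp: p_def)
  have "real (card ?T) = (\<Sum>v\<in>?T. 1)" by simp
  also have "\<dots> \<le> (\<Sum>v\<in>?T. (\<Prod>i\<in>UNIV. p (v$i)) * q powr (qentropy q \<alpha> * N))"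
    by (rule sum_mono) (use key N_def in auto)
  also have "\<dots> \<le> (\<Sum>v::'a^'n\<in>UNIV. (\<Prod>i\<in>UNIV. p (v$i)) * q powr (qentropy q \<alpha> * N))"
    by (rule sum_mono2) (use nn in auto)
  also have "\<dots> = q powr (qentropy q \<alpha> * N)"
    by (simp add: sum_distrib_right[symmetric] sum_vec_prod sp)
  finally show ?thesis unfolding N_def .
qed

lemma card_span_indep:
  fixes B :: "('a::{finite,field} ^ 'n) set"
  assumes ind: "vec.independent B"
  shows "card (vec.span B) = CARD('a) ^ card B"
proof -
  have fin: "finite B" using ind vec.independent_bound_general by blast
  define f where "f u = (\<Sum>v\<in>B. u v *s v)" for u :: "'a^'n \<Rightarrow> 'a"
  have sp: "vec.span B = f ` (B \<rightarrow>\<^sub>E UNIV)"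
  proof -
    have "vec.span B = range f" unfolding f_def by (rule vec.span_finite[OF fin])
    also have "\<dots> = f ` (B \<rightarrow>\<^sub>E UNIV)"
    proof
      show "range f \<subseteq> f ` (B \<rightarrow>\<^sub>E UNIV)"
      proof
        fix y assume "y \<in> range f"
        then obtain u where y: "y = f u" by auto
        have "f u = f (restrict u B)" unfolding f_def by (rule sum.cong) auto
        thus "y \<in> f ` (B \<rightarrow>\<^sub>E UNIV)" using y by auto
      qed
    qed auto
    finally show ?thesis .
  qed
  have inj: "inj_on f (B \<rightarrow>\<^sub>E UNIV)"
  proof (rule inj_onI)
    fix u u' assume u: "u \<in> B \<rightarrow>\<^sub>E UNIV" "u' \<in> B \<rightarrow>\<^sub>E UNIV" and e: "f u = f u'"
    have "(\<Sum>v\<in>B. (u v - u' v) *s v) = f u - f u'"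
      unfolding f_def by (simp add: vec.scale_left_diff_distrib sum_subtractf)
    hence "(\<Sum>v\<in>B. (u v - u' v) *s v) = 0" using e by simp
    moreover have c: "\<forall>c. (\<Sum>v\<in>B. c v *s v) = 0 \<longrightarrow> (\<forall>v\<in>B. c v = 0)"
      using ind unfolding vec.independent_explicit by blast
    ultimately have "\<forall>v\<in>B. u v - u' v = 0" using c[rule_format, of "\<lambda>v. u v - u' v"] by blast
    thus "u = u'" using u by (intro PiE_ext) auto
  qed
  have "card (vec.span B) = card (B \<rightarrow>\<^sub>E (UNIV::'a set))" unfolding sp by (rule card_image[OF inj])
  also have "\<dots> = CARD('a) ^ card B" by (simp add: card_funcsetE fin)
  finally show ?thesis .
qed

lemma card_span_le:
  fixes S :: "('a::{finite,field} ^ 'n) set"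
  shows "card (vec.span S) \<le> CARD('a) ^ card S"
proof -
  obtain B where B: "B \<subseteq> S" "vec.independent B" "S \<subseteq> vec.span B"
    using vec.maximal_independent_subset by blast
  have "vec.span S = vec.span B"
    using B by (metis vec.span_mono vec.span_span subset_antisym)
  moreover have "card B \<le> card S" using B(1) by (rule card_mono[OF finite])
  ultimately show ?thesis using card_span_indep[OF B(2)]
    by (simp add: power_increasing card_field_ge2)
qed

lemma card_subspace:
  fixes X :: "('a::{finite,field} ^ 'n) set"
  assumes "vec.subspace X"
  shows "card X = CARD('a) ^ vec.dim X"
proof -
  obtain B where B: "B \<subseteq> X" "vec.independent B" "X \<subseteq> vec.span B" "card B = vec.dim X"
    using vec.basis_exists by blast
  have "vec.span B = X" using B assms by (intro vec.span_subspace) auto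
  thus ?thesis using card_span_indep[OF B(2)] B(4) by simp
qed

definition okl :: "('a::field ^ 'n) set \<Rightarrow> ('a ^ 'n) list \<Rightarrow> bool" where
  "okl E w \<longleftrightarrow> (\<forall>i<length w. w!i \<notin> vec.span (E \<union> set (take i w)))"

lemma okl_Nil[simp]: "okl E []" by (simp add: okl_def)

lemma okl_snoc: "okl E (w @ [v]) \<longleftrightarrow> okl E w \<and> v \<notin> vec.span (E \<union> set w)"
  unfolding okl_def
  by (auto simp: nth_append less_Suc_eq)

lemma okl_indep:
  assumes "vec.independent E" "okl E w"
  shows "vec.independent (E \<union> set w) \<and> card (E \<union> set w) = card E + length w"
  using assms(2)
proof (induction w rule: rev_induct)
  case Nil
  then show ?case using assms(1) by simp
next
  case (snoc v w)
  have o: "okl E w" "v \<notin> vec.span (E \<union> set w)" using snoc.prems okl_snoc by auto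
  have IH: "vec.independent (E \<union> set w)" "card (E \<union> set w) = card E + length w"
    using snoc.IH[OF o(1)] by auto
  have nv: "v \<notin> E \<union> set w" using o(2) vec.span_base by blast
  have fin: "finite (E \<union> set w)" using IH(1) vec.independent_bound_general by blast
  have "E \<union> set (w @ [v]) = insert v (E \<union> set w)" by auto
  thus ?case using IH nv o(2) fin by (simp add: vec.independent_insert)
qed

lemma count_tuples:
  fixes X E :: "('a::{finite,field} ^ 'n) set"
  assumes X: "vec.subspace X" and EX: "E \<subseteq> X" and ind: "vec.independent E"
  shows "card E + k \<le> vec.dim X \<Longrightarrow>
    real (card {w. length w = k \<and> set w \<subseteq> X \<and> okl E w})
      = (\<Prod>i<k. real (card X) - real CARD('a) ^ (card E + i))"
proof (induction k)
  case 0
  have "{w. length w = 0 \<and> set w \<subseteq> X \<and> okl E w} = {[]}" by auto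
  then show ?case by simp
next
  case (Suc k)
  define A where "A k = {w. length w = k \<and> set w \<subseteq> X \<and> okl E w}" for k
  have IH: "real (card (A k)) = (\<Prod>i<k. real (card X) - real CARD('a) ^ (card E + i))"
    using Suc unfolding A_def by simp
  have eq: "A (Suc k) = (\<lambda>(w, v). w @ [v]) ` (SIGMA w:A k. X - vec.span (E \<union> set w))"
  proof (intro set_eqI iffI)
    fix u assume u: "u \<in> A (Suc k)"
    hence "length u = Suc k" unfolding A_def by simp
    then obtain w v where wv: "u = w @ [v]" "length w = k"
      using length_Suc_conv_rev[of u k] by blast
    have "w \<in> A k" "v \<in> X - vec.span (E \<union> set w)" using u wv unfolding A_def by (auto simp: okl_snoc)
    thus "u \<in> (\<lambda>(w, v). w @ [v]) ` (SIGMA w:A k. X - vec.span (E \<union> set w))"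
      using wv by (intro image_eqI[of _ _ "(w,v)"]) auto
  next
    fix u assume "u \<in> (\<lambda>(w, v). w @ [v]) ` (SIGMA w:A k. X - vec.span (E \<union> set w))"
    thus "u \<in> A (Suc k)" unfolding A_def by (auto simp: okl_snoc)
  qed
  have inj: "inj_on (\<lambda>(w, v). w @ [v]) (SIGMA w:A k. X - vec.span (E \<union> set w))"
    by (auto simp: inj_on_def)
  have cs: "card (vec.span (E \<union> set w)) = CARD('a) ^ (card E + k)" if "w \<in> A k" for w
  proof -
    have "okl E w" "length w = k" using that unfolding A_def by auto
    from okl_indep[OF ind this(1)] this(2) show ?thesis using card_span_indep by metis
  qed
  have sub: "vec.span (E \<union> set w) \<subseteq> X" if "w \<in> A k" for w
    using that EX X unfolding A_def by (intro vec.span_minimal) auto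
  have le: "CARD('a) ^ (card E + k) \<le> card X"
    unfolding card_subspace[OF X] using Suc.prems card_field_ge2[where 'a='a]
    by (intro power_increasing) auto
  have "card (A (Suc k)) = card (SIGMA w:A k. X - vec.span (E \<union> set w))"
    unfolding eq by (rule card_image[OF inj])
  also have "\<dots> = (\<Sum>w\<in>A k. card (X - vec.span (E \<union> set w)))"
  proof (rule card_SigmaI)
    show "finite (A k)"
      by (rule finite_subset[OF _ finite_lists_length_eq[OF finite[of X], of k]]) (auto simp: A_def)
  qed auto
  also have "\<dots> = (\<Sum>w\<in>A k. card X - CARD('a) ^ (card E + k))"
    by (rule sum.cong) (auto simp: card_Diff_subset sub cs)
  also have "\<dots> = card (A k) * (card X - CARD('a) ^ (card E + k))" by simp
  finally have "real (card (A (Suc k))) = real (card (A k)) * (real (card X) - real CARD('a) ^ (card E + k))"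
    using le by (simp add: of_nat_diff)
  thus ?case using IH unfolding A_def by simp
qed

lemma span_eq_if_okl:
  fixes E :: "('a::{finite,field} ^ 'n) set"
  assumes ind: "vec.independent E" and C: "vec.subspace C" "vec.dim C = card E + length w" "E \<subseteq> C"
    and w: "set w \<subseteq> C" "okl E w"
  shows "C = vec.span (E \<union> set w)"
proof -
  have I: "vec.independent (E \<union> set w)" "card (E \<union> set w) = card E + length w"
    using okl_indep[OF ind w(2)] by auto
  have fin: "finite (E \<union> set w)" using I(1) vec.independent_bound_general by blast
  have "C \<subseteq> vec.span (E \<union> set w)"
    using vec.card_eq_dim[of "E \<union> set w" C] I fin C w by auto
  moreover have "vec.span (E \<union> set w) \<subseteq> C" using C w by (intro vec.span_minimal) auto
  ultimately show ?thesis by auto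
qed

lemma count_sub:
  fixes E :: "('a::{finite,field} ^ 'n) set"
  assumes ind: "vec.independent E" and ej: "card E \<le> j" and jN: "j \<le> CARD('n)"
  shows "real (card {C. vec.subspace C \<and> vec.dim C = j \<and> E \<subseteq> C})
           * (\<Prod>i<j - card E. real CARD('a) ^ j - real CARD('a) ^ (card E + i))
         = (\<Prod>i<j - card E. real CARD('a) ^ CARD('n) - real CARD('a) ^ (card E + i))"
proof -
  define k where "k = j - card E"
  define T where "T X = {w. length w = k \<and> set w \<subseteq> X \<and> okl E w}" for X :: "('a^'n) set"
  define SC where "SC = {C. vec.subspace C \<and> vec.dim C = j \<and> E \<subseteq> C}"
  have jk: "j = card E + k" unfolding k_def using ej by simp
  have finT: "finite (T X)" for X
    by (rule finite_subset[OF _ finite_lists_length_eq[OF finite[of UNIV], of k]]) (auto simp: T_def)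
  have sp: "C = vec.span (E \<union> set w)" if "C \<in> SC" "w \<in> T C" for C w
    using that unfolding SC_def T_def by (intro span_eq_if_okl[OF ind]) (auto simp: jk)
  have U: "T UNIV = (\<Union>C\<in>SC. T C)"
  proof (intro set_eqI iffI)
    fix w assume w: "w \<in> T UNIV"
    hence o: "okl E w" "length w = k" unfolding T_def by auto
    have I: "vec.independent (E \<union> set w)" "card (E \<union> set w) = card E + length w"
      using okl_indep[OF ind o(1)] by auto
    have "vec.span (E \<union> set w) \<in> SC" unfolding SC_def
      using I o vec.span_superset[of "E \<union> set w"] by (auto simp: vec.dim_eq_card_independent jk)
    moreover have "w \<in> T (vec.span (E \<union> set w))"
      using w vec.span_superset[of "E \<union> set w"] unfolding T_def by auto
    ultimately show "w \<in> (\<Union>C\<in>SC. T C)" by blast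
  qed (auto simp: T_def)
  have "card (T UNIV) = (\<Sum>C\<in>SC. card (T C))"
    unfolding U
  proof (rule card_UN_disjoint)
    show "finite SC" by (rule finite_subset[OF _ finite[of UNIV]]) auto
    show "\<forall>i\<in>SC. finite (T i)" using finT by auto
    show "\<forall>i\<in>SC. \<forall>ja\<in>SC. i \<noteq> ja \<longrightarrow> T i \<inter> T ja = {}"
      using sp by blast
  qed
  hence "real (card (T UNIV)) = (\<Sum>C\<in>SC. real (card (T C)))" by simp
  also have "\<dots> = (\<Sum>C\<in>SC. \<Prod>i<k. real CARD('a) ^ j - real CARD('a) ^ (card E + i))"
  proof (rule sum.cong[OF refl])
    fix C assume C: "C \<in> SC"
    have "real (card (T C)) = (\<Prod>i<k. real (card C) - real CARD('a) ^ (card E + i))"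
      unfolding T_def using C unfolding SC_def by (intro count_tuples) (auto simp: jk ind)
    also have "card C = CARD('a) ^ j" using C card_subspace unfolding SC_def by auto
    finally show "real (card (T C)) = (\<Prod>i<k. real CARD('a) ^ j - real CARD('a) ^ (card E + i))"
      by simp
  qed
  also have "\<dots> = real (card SC) * (\<Prod>i<k. real CARD('a) ^ j - real CARD('a) ^ (card E + i))"
    by simp
  finally have A: "real (card (T UNIV)) = real (card SC) * (\<Prod>i<k. real CARD('a) ^ j - real CARD('a) ^ (card E + i))" .
  have "real (card (T UNIV)) = (\<Prod>i<k. real (card (UNIV::('a^'n) set)) - real CARD('a) ^ (card E + i))"
    unfolding T_def by (intro count_tuples) (use jk jN vec_dim_card[where 'a='a and 'n='n] ind in auto)
  hence "real (card (T UNIV)) = (\<Prod>i<k. real CARD('a) ^ CARD('n) - real CARD('a) ^ (card E + i))"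
    by (simp add: CARD_vec)
  with A show ?thesis unfolding SC_def k_def by simp
qed

lemma prod_lessThan_add_split:
  fixes f :: "nat \<Rightarrow> real"
  shows "(\<Prod>i<a+b. f i) = (\<Prod>i<a. f i) * (\<Prod>i<b. f (a+i))"
  by (induction b) (auto simp: mult_ac)

definition FF :: "real \<Rightarrow> real \<Rightarrow> nat \<Rightarrow> nat \<Rightarrow> real" where
  "FF q Q e k = (\<Prod>i<k. Q - q ^ (e + i))"

lemma FF_split: "FF q Q e (a + b) = FF q Q e a * FF q Q (e + a) b"
  unfolding FF_def by (subst prod_lessThan_add_split) (simp add: add.assoc)

lemma FF_pos: "q > 1 \<Longrightarrow> e + k \<le> j \<Longrightarrow> FF q (q ^ j) e k > 0"
  unfolding FF_def by (intro prod_pos) (auto intro!: power_strict_increasing)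

abbreviation ones :: "'a::field ^ 'n" where "ones \<equiv> (\<chi> i. 1)"

lemma indep_ones: "vec.independent {ones :: 'a::field ^ 'n}"
proof -
  have "ones \<noteq> (0 :: 'a ^ 'n)" by (simp add: vec_eq_iff)
  thus ?thesis by (simp add: vec.independent_insert vec.span_empty)
qed

lemma codes_as_SC: "(codes_with_ones r :: ('a::field ^ 'n) set set) = {C. vec.subspace C \<and> vec.dim C = CARD('n) - r \<and> {ones} \<subseteq> C}"
  unfolding codes_with_ones_def by auto

lemma codes_nonempty:
  assumes "r < CARD('n)"
  shows "card (codes_with_ones r :: ('a::{finite,field} ^ 'n) set set) > 0"
proof -
  define j where "j = CARD('n) - r"
  define q where "q = real CARD('a)"
  have q1: "q > 1" unfolding q_def using card_field_ge2[where 'a='a] by simp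
  have j1: "1 \<le> j" "j \<le> CARD('n)" using assms unfolding j_def by auto
  have "real (card (codes_with_ones r :: ('a ^ 'n) set set)) * FF q (q^j) 1 (j - 1) = FF q (q ^ CARD('n)) 1 (j - 1)"
    using count_sub[OF indep_ones[where 'a='a and 'n='n], of j] j1 unfolding codes_as_SC FF_def q_def j_def by simp
  moreover have "FF q (q ^ CARD('n)) 1 (j - 1) > 0" using q1 j1 by (intro FF_pos) auto
  ultimately show ?thesis by (metis mult_eq_0_iff of_nat_0 gr0I less_irrefl)
qed

lemma event_bound:
  fixes w :: "('a::{finite,field} ^ 'n) list"
  assumes r: "r < CARD('n)" and o: "okl {ones} w"
  shows "real (card {C \<in> codes_with_ones r. set w \<subseteq> C}) * real CARD('a) ^ (r * length w)
         \<le> real (card (codes_with_ones r :: ('a ^ 'n) set set))"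
proof -
  define j where "j = CARD('n) - r"
  define q where "q = real CARD('a)"
  define s where "s = length w"
  define N where "N = CARD('n)"
  have q1: "q > 1" unfolding q_def using card_field_ge2[where 'a='a] by simp
  have jN: "j \<le> N" "r + j = N" using r unfolding j_def N_def by auto
  define E1 where "E1 = {ones} \<union> set w"
  have I: "vec.independent E1" "card E1 = 1 + s"
    using okl_indep[OF indep_ones o] unfolding E1_def s_def by auto
  have eqs: "{C \<in> codes_with_ones r. set w \<subseteq> C} = {C. vec.subspace C \<and> vec.dim C = j \<and> E1 \<subseteq> C}"
    unfolding codes_with_ones_def E1_def j_def by auto
  show ?thesis
  proof (cases "1 + s \<le> j")
    case False
    have "{C. vec.subspace C \<and> vec.dim C = j \<and> E1 \<subseteq> C} = {}"
      using vec.independent_card_le_dim[of E1] I False by force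
    hence e0: "{C \<in> codes_with_ones r. set w \<subseteq> C} = {}" using eqs by simp
    show ?thesis by (simp only: e0 card.empty)
  next
    case True
    define c1 where "c1 = real (card (codes_with_ones r :: ('a ^ 'n) set set))"
    define c2 where "c2 = real (card {C \<in> codes_with_ones r. set w \<subseteq> C})"
    define k' where "k' = j - 1 - s"
    have jsplit: "j - 1 = s + k'" unfolding k'_def using True by simp
    have a: "c1 * FF q (q^j) 1 (j - 1) = FF q (q ^ N) 1 (j - 1)"
      using count_sub[OF indep_ones[where 'a='a and 'n='n], of j] True jN
      unfolding c1_def codes_as_SC FF_def q_def j_def N_def by simp
    have b: "c2 * FF q (q^j) (1+s) k' = FF q (q ^ N) (1+s) k'"
      using count_sub[OF I(1), of j] True jN unfolding c2_def eqs FF_def q_def N_def k'_def I(2)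
      by simp
    have p1: "FF q (q^j) (1+s) k' > 0" using q1 True by (intro FF_pos) (auto simp: k'_def)
    have p2: "FF q (q^j) 1 s > 0" using q1 True by (intro FF_pos) auto
    have "c1 * FF q (q^j) 1 s * FF q (q^j) (1+s) k' = c2 * FF q (q ^ N) 1 s * FF q (q^j) (1+s) k'"
    proof -
      have "c1 * FF q (q^j) 1 s * FF q (q^j) (1+s) k' = c1 * FF q (q^j) 1 (j - 1)"
        unfolding jsplit FF_split by (simp add: mult_ac)
      also have "\<dots> = FF q (q ^ N) 1 (j - 1)" by (rule a)
      also have "\<dots> = FF q (q ^ N) 1 s * FF q (q ^ N) (1+s) k'"
        unfolding jsplit FF_split by simp
      also have "\<dots> = c2 * FF q (q ^ N) 1 s * FF q (q^j) (1+s) k'" using b by (simp add: mult_ac)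
      finally show ?thesis .
    qed
    hence E: "c1 * FF q (q^j) 1 s = c2 * FF q (q ^ N) 1 s" using p1 by simp
    have M: "FF q (q^j) 1 s * q ^ (r * s) \<le> FF q (q ^ N) 1 s"
    proof -
      have "FF q (q^j) 1 s * q ^ (r * s) = (\<Prod>i<s. q^r * (q^j - q^(1+i)))"
        unfolding FF_def by (simp add: prod.distrib power_mult mult_ac)
      also have "\<dots> \<le> (\<Prod>i<s. q^N - q^(1+i))"
      proof (rule prod_mono, rule conjI)
        fix i assume i: "i \<in> {..<s}"
        have le: "q^(1+i) \<le> q^j" using q1 i True by (intro power_increasing) auto
        show "0 \<le> q^r * (q^j - q^(1+i))" using le q1 by simp
        have "q^r * q^(1+i) \<ge> 1 * q^(1+i)" using q1 by (intro mult_right_mono) auto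
        moreover have "q^r * q^j = q^N" using jN by (simp add: power_add[symmetric])
        ultimately show "q^r * (q^j - q^(1+i)) \<le> q^N - q^(1+i)" by (simp add: algebra_simps)
      qed
      finally show ?thesis unfolding FF_def .
    qed
    have "c2 * q ^ (r * s) * FF q (q^j) 1 s \<le> c2 * FF q (q ^ N) 1 s"
      using mult_left_mono[OF M, of c2] unfolding c2_def by (simp add: mult_ac)
    also have "\<dots> = c1 * FF q (q^j) 1 s" using E by simp
    finally have "c2 * q ^ (r * s) \<le> c1" using p2 by simp
    thus ?thesis unfolding c1_def c2_def q_def s_def .
  qed
qed

lemma okl_ones_of:
  fixes V :: "('a::field ^ 'n) set"
  assumes V: "vec.subspace V" and w: "set w \<subseteq> V" and o: "okl (if ones \<in> V then {ones} else {}) w"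
  shows "okl {ones} w"
proof (cases "ones \<in> V")
  case True thus ?thesis using o by simp
next
  case False
  show ?thesis unfolding okl_def
  proof (intro allI impI)
    fix i assume i: "i < length w"
    have n: "w!i \<notin> vec.span (set (take i w))" using o False i unfolding okl_def by auto
    show "w!i \<notin> vec.span ({ones} \<union> set (take i w))"
    proof
      assume "w!i \<in> vec.span ({ones} \<union> set (take i w))"
      hence "w!i \<in> vec.span (insert ones (set (take i w)))" by simp
      then obtain k where k: "w!i - k *s ones \<in> vec.span (set (take i w))"
        unfolding vec.span_insert by blast
      have sub: "vec.span (set (take i w)) \<subseteq> V"
        using w V by (intro vec.span_minimal) (auto dest: in_set_takeD)
      have wi: "w!i \<in> V" using w i by auto
      show False
      proof (cases "k = 0")
        case True thus False using k n by simp
      next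
        case False
        have "k *s ones = w!i - (w!i - k *s ones)" by simp
        hence "k *s ones \<in> V" using k sub wi V by (metis subsetD vec.subspace_diff)
        hence "inverse k *s (k *s ones) \<in> V" using V by (rule vec.subspace_scale[rotated])
        hence "ones \<in> V" using False by simp
        thus False using \<open>ones \<notin> V\<close> by simp
      qed
    qed
  qed
qed

lemma markov_b:
  fixes b :: "('a::{finite,field} ^ 'n) list"
  assumes r: "r < CARD('n)" and m1: "1 \<le> length b"
  shows "real (card {C \<in> codes_with_ones r. (length b + 1) div 2 \<le> vec.dim (C \<inter> vec.span (set b))})
          * (real CARD('a) ^ ((length b + 1) div 2) / 2) ^ ((length b + 1) div 2 - (if ones \<in> vec.span (set b) then 1 else 0))
          * real CARD('a) ^ (r * ((length b + 1) div 2 - (if ones \<in> vec.span (set b) then 1 else 0)))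
        \<le> real CARD('a) ^ (length b * ((length b + 1) div 2 - (if ones \<in> vec.span (set b) then 1 else 0)))
          * real (card (codes_with_ones r :: ('a ^ 'n) set set))"
proof -
  define m where "m = length b"
  define V where "V = vec.span (set b)"
  define t where "t = (m + 1) div 2"
  define E :: "('a^'n) set" where "E = (if ones \<in> V then {ones} else {})"
  define e where "e = (if ones \<in> V then 1 else 0::nat)"
  define s where "s = t - e"
  define q where "q = real CARD('a)"
  define Codes where "Codes = (codes_with_ones r :: ('a ^ 'n) set set)"
  define Ev where "Ev = {C \<in> Codes. t \<le> vec.dim (C \<inter> V)}"
  define Tb where "Tb = {w. length w = s \<and> set w \<subseteq> V \<and> okl E w}"
  define L where "L = (q ^ t / 2) ^ s"
  have q2: "q \<ge> 2" unfolding q_def using card_field_ge2[where 'a='a] by simp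
  have t1: "1 \<le> t" using m1 unfolding t_def m_def by simp
  have cE: "card E = e" "e \<le> 1" unfolding E_def e_def by auto
  have st: "e + s = t" unfolding s_def using t1 cE by auto
  have indE: "vec.independent E" unfolding E_def using indep_ones vec.independent_empty by auto
  have Vs: "vec.subspace V" unfolding V_def by simp
  have EV: "E \<subseteq> V" unfolding E_def by auto
  have finCodes: "finite Codes" by (rule finite_subset[OF _ finite[of UNIV]]) auto
  have finTb: "finite Tb"
    by (rule finite_subset[OF _ finite_lists_length_eq[OF finite[of UNIV], of s]]) (auto simp: Tb_def)
  have Ev_sub: "Ev \<subseteq> Codes" unfolding Ev_def by auto
  have low: "L \<le> real (card {w \<in> Tb. set w \<subseteq> C})" if C: "C \<in> Ev" for C
  proof -
    define X where "X = C \<inter> V"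
    have Cs: "vec.subspace C" "ones \<in> C" using C unfolding Ev_def Codes_def codes_with_ones_def by auto
    have Xs: "vec.subspace X" unfolding X_def using Cs(1) Vs by (rule vec.subspace_inter)
    have dX: "t \<le> vec.dim X" using C unfolding Ev_def X_def by auto
    have EX: "E \<subseteq> X" unfolding X_def using EV Cs unfolding E_def by auto
    have eqT: "{w \<in> Tb. set w \<subseteq> C} = {w. length w = s \<and> set w \<subseteq> X \<and> okl E w}"
      unfolding Tb_def X_def by auto
    have "real (card {w. length w = s \<and> set w \<subseteq> X \<and> okl E w})
          = (\<Prod>i<s. real (card X) - real CARD('a) ^ (card E + i))"
      using count_tuples[OF Xs EX indE, of s] dX st cE by simp
    also have "\<dots> \<ge> (\<Prod>i<s. q ^ t / 2)"
    proof (rule prod_mono, rule conjI)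
      fix i assume i: "i \<in> {..<s}"
      have cX: "q ^ t \<le> real (card X)"
        unfolding card_subspace[OF Xs] q_def using dX q2
        by (simp add: power_increasing q_def)
      have "q ^ (e + i) \<le> q ^ (t - 1)" using i st q2 by (intro power_increasing) auto
      moreover have "q ^ t = q * q ^ (t - 1)" using t1 by (metis Suc_diff_1 less_le_trans zero_less_one power_Suc)
      moreover have "2 * q ^ (t - 1) \<le> q * q ^ (t - 1)" using q2 by (intro mult_right_mono) auto
      ultimately have "2 * q ^ (e + i) \<le> q ^ t" by linarith
      hence "q ^ t / 2 \<le> real (card X) - q ^ (e + i)" using cX by linarith
      thus "q ^ t / 2 \<le> real (card X) - real CARD('a) ^ (card E + i)"
        using cE unfolding q_def by simp
      show "0 \<le> q ^ t / 2" using q2 by simp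
    qed
    finally show ?thesis unfolding eqT L_def by simp
  qed
  have okw: "okl {ones} w" if "w \<in> Tb" for w
    using that okl_ones_of[OF Vs] unfolding Tb_def E_def by auto
  have "real (card Ev) * L = (\<Sum>C\<in>Ev. L)" by simp
  also have "\<dots> \<le> (\<Sum>C\<in>Ev. real (card {w \<in> Tb. set w \<subseteq> C}))"
    by (rule sum_mono) (rule low)
  also have "\<dots> \<le> (\<Sum>C\<in>Codes. real (card {w \<in> Tb. set w \<subseteq> C}))"
    by (rule sum_mono2[OF finCodes Ev_sub]) auto
  also have "\<dots> = (\<Sum>C\<in>Codes. \<Sum>w\<in>Tb. if set w \<subseteq> C then 1 else 0)"
    by (rule sum.cong[OF refl]) (simp add: sum.If_cases finTb Int_def)
  also have "\<dots> = (\<Sum>w\<in>Tb. \<Sum>C\<in>Codes. if set w \<subseteq> C then 1 else 0)"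
    by (rule sum.swap)
  also have "\<dots> = (\<Sum>w\<in>Tb. real (card {C \<in> Codes. set w \<subseteq> C}))"
    by (rule sum.cong[OF refl]) (simp add: sum.If_cases finCodes Int_def)
  finally have A: "real (card Ev) * L \<le> (\<Sum>w\<in>Tb. real (card {C \<in> Codes. set w \<subseteq> C}))" .
  have "real (card Ev) * L * q ^ (r * s) \<le> (\<Sum>w\<in>Tb. real (card {C \<in> Codes. set w \<subseteq> C}) * q ^ (r * s))"
    using mult_right_mono[OF A, of "q ^ (r * s)"] q2 by (simp add: sum_distrib_right)
  also have "\<dots> \<le> (\<Sum>w\<in>Tb. real (card Codes))"
  proof (rule sum_mono)
    fix w assume w: "w \<in> Tb"
    have "length w = s" using w unfolding Tb_def by simp
    thus "real (card {C \<in> Codes. set w \<subseteq> C}) * q ^ (r * s) \<le> real (card Codes)"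
      using event_bound[OF r okw[OF w]] unfolding Codes_def q_def by simp
  qed
  also have "\<dots> = real (card Tb) * real (card Codes)" by simp
  also have "\<dots> \<le> q ^ (m * s) * real (card Codes)"
  proof (rule mult_right_mono)
    have "card Tb \<le> card {w. set w \<subseteq> V \<and> length w = s}"
      by (rule card_mono[OF finite_lists_length_eq[OF finite[of V]]]) (auto simp: Tb_def)
    also have "\<dots> = card V ^ s" by (rule card_lists_length_eq) simp
    also have "\<dots> \<le> (CARD('a) ^ m) ^ s"
    proof (rule power_mono)
      have "card V \<le> CARD('a) ^ card (set b)" unfolding V_def by (rule card_span_le)
      also have "\<dots> \<le> CARD('a) ^ m" unfolding m_def
        using card_field_ge2[where 'a='a] by (intro power_increasing card_length) auto
      finally show "card V \<le> CARD('a) ^ m" .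
    qed simp
    finally have "card Tb \<le> (CARD('a) ^ m) ^ s" .
    hence "real (card Tb) \<le> real ((CARD('a) ^ m) ^ s)" by linarith
    thus "real (card Tb) \<le> q ^ (m * s)" unfolding q_def by (simp add: power_mult)
  qed simp
  finally show ?thesis
    unfolding m_def[symmetric] V_def[symmetric] t_def[symmetric] e_def[symmetric] s_def[symmetric]
      q_def[symmetric] Codes_def[symmetric] Ev_def[symmetric] L_def[symmetric]
    by simp
qed

lemma support_span:
  fixes S :: "('a::field ^ 'n) set"
  assumes "x \<in> vec.span S" "x$i \<noteq> 0"
  shows "\<exists>v\<in>S. v$i \<noteq> 0"
proof -
  have "x \<in> {x. \<forall>i. x$i \<noteq> 0 \<longrightarrow> (\<exists>v\<in>S. v$i \<noteq> 0)}"
  proof (rule vec.span_subspace_induct[OF assms(1)])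
    show "vec.subspace {x. \<forall>i. x$i \<noteq> 0 \<longrightarrow> (\<exists>v\<in>S. v$i \<noteq> 0)}"
      unfolding vec.subspace_def by (auto, metis add.left_neutral)
  qed auto
  thus ?thesis using assms(2) by auto
qed

lemma nine:
  fixes b :: "('a::field ^ 'n) list"
  assumes b: "set b \<subseteq> {v. real (hweight v) \<le> \<alpha> * real CARD('n)}" and a: "0 \<le> \<alpha>" "\<alpha> < 1/8"
    and o: "ones \<in> vec.span (set b)"
  shows "9 \<le> length b"
proof -
  define N where "N = CARD('n)"
  have U: "(UNIV :: 'n set) \<subseteq> (\<Union>v\<in>set b. {i. v$i \<noteq> 0})"
  proof
    fix i :: 'n
    have "(ones :: 'a^'n) $ i \<noteq> 0" by simp
    then obtain v where "v \<in> set b" "v$i \<noteq> 0" using support_span[OF o] by blast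
    thus "i \<in> (\<Union>v\<in>set b. {i. v$i \<noteq> 0})" by auto
  qed
  have "N \<le> card (\<Union>v\<in>set b. {i. v$i \<noteq> 0})" unfolding N_def by (rule card_mono[OF finite U])
  also have "\<dots> \<le> (\<Sum>v\<in>set b. card {i. v$i \<noteq> 0})" by (rule card_UN_le) simp
  finally have "real N \<le> (\<Sum>v\<in>set b. real (hweight v))" unfolding hweight_def
    by (metis of_nat_le_iff of_nat_sum)
  also have "\<dots> \<le> (\<Sum>v\<in>set b. \<alpha> * real N)" by (rule sum_mono) (use b N_def in auto)
  also have "\<dots> = real (card (set b)) * (\<alpha> * real N)" by simp
  also have "\<dots> \<le> real (length b) * (\<alpha> * real N)"
    by (rule mult_right_mono) (use a card_length in auto)
  finally have A: "real N \<le> real (length b) * (\<alpha> * real N)" .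
  have Np: "real N > 0" unfolding N_def by simp
  have "real (length b) * (\<alpha> * real N) \<le> real (length b) * (1/8 * real N)"
    using a Np by (intro mult_left_mono) auto
  hence "real N \<le> real (length b) * real N / 8" using A by simp
  hence "8 * real N \<le> real (length b) * real N" by simp
  hence "8 \<le> real (length b)" using Np by (rule mult_right_le_imp_le)
  hence "8 \<le> length b" by linarith
  moreover have "8 \<noteq> length b"
  proof
    assume "8 = length b"
    hence "real N \<le> 8 * (\<alpha> * real N)" using A by simp
    moreover have "8 * (\<alpha> * real N) < real N" using a Np by simp
    ultimately show False by simp
  qed
  ultimately show ?thesis by simp
qed

lemma expo_ineq:
  fixes m r t s :: nat
  assumes m: "m \<le> r" and t: "t = (m + 1) div 2"
    and cases: "(s = t) \<or> (s + 1 = t \<and> 9 \<le> m)"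
  shows "5 * real r * real m / 32 \<le> real s * (real r - real m + real t)"
proof -
  have t2: "real m \<le> 2 * real t" using t by linarith
  have K: "real r / 2 \<le> real r - real m + real t" using t2 m by simp
  from cases show ?thesis
  proof
    assume s: "s = t"
    have "(real m / 2) * (real r / 2) \<le> real s * (real r - real m + real t)"
      using t2 K s by (intro mult_mono) auto
    hence "real m * real r \<le> 4 * (real s * (real r - real m + real t))" by simp
    moreover have "0 \<le> real m * real r" by simp
    moreover have "5 * real r * real m = 5 * (real m * real r)" by simp
    ultimately show ?thesis by linarith
  next
    assume s: "s + 1 = t \<and> 9 \<le> m"
    have "7 * real m / 18 \<le> real s" using s t2 by linarith
    hence "(7 * real m / 18) * (real r / 2) \<le> real s * (real r - real m + real t)"
      using K by (intro mult_mono) auto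
    moreover have "5 * real r * real m / 32 \<le> (7 * real m / 18) * (real r / 2)" by simp
    ultimately show ?thesis by linarith
  qed
qed

lemma perb:
  fixes b :: "('a::{finite,field} ^ 'n) list"
  assumes r: "r < CARD('n)" and m1: "1 \<le> length b" and mr: "length b \<le> r"
    and nn: "ones \<in> vec.span (set b) \<Longrightarrow> 9 \<le> length b"
    and q2r: "2 \<le> real CARD('a) powr (real r / 64)"
  shows "real (card {C \<in> codes_with_ones r. (length b + 1) div 2 \<le> vec.dim (C \<inter> vec.span (set b))})
         \<le> real CARD('a) powr (- (real r * real (length b) / 8) - real r * real (length b) / 64)
           * real (card (codes_with_ones r :: ('a ^ 'n) set set))"
proof -
  define m where "m = length b"
  define t where "t = (m + 1) div 2"
  define e where "e = (if ones \<in> vec.span (set b) then 1 else 0::nat)"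
  define s where "s = t - e"
  define q where "q = real CARD('a)"
  define ce where "ce = real (card {C \<in> codes_with_ones r. (length b + 1) div 2 \<le> vec.dim (C \<inter> vec.span (set b))})"
  define cc where "cc = real (card (codes_with_ones r :: ('a ^ 'n) set set))"
  have q2: "q \<ge> 2" unfolding q_def using card_field_ge2[where 'a='a] by simp
  have qp: "q > 0" using q2 by simp
  have ce0: "ce \<ge> 0" "cc \<ge> 0" unfolding ce_def cc_def by auto
  have M: "ce * (q ^ t / 2) ^ s * q ^ (r * s) \<le> q ^ (m * s) * cc"
    using markov_b[OF r m1] unfolding ce_def cc_def q_def m_def t_def s_def e_def by simp
  have "(q ^ t / 2) ^ s = q ^ (t * s) / 2 ^ s" by (simp add: power_divide power_mult)
  hence "ce * q ^ (t * s) * q ^ (r * s) \<le> 2 ^ s * (q ^ (m * s) * cc)"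
    using M by (simp add: field_simps)
  hence A: "ce \<le> 2 ^ s * (q ^ (m * s) * cc) / (q ^ (t * s) * q ^ (r * s))"
    using qp by (simp add: field_simps)
  have p2: "(2::real) ^ s \<le> q powr (real r * real s / 64)"
  proof -
    have "(2::real) ^ s \<le> (q powr (real r / 64)) ^ s" using q2r unfolding q_def by (intro power_mono) auto
    also have "\<dots> = q powr (real r * real s / 64)" using qp
      by (simp add: powr_realpow[symmetric] powr_powr)
    finally show ?thesis .
  qed
  have B: "ce \<le> q powr (real r * real s / 64 + real (m * s) - real (t * s) - real (r * s)) * cc"
  proof -
    have "2 ^ s * (q ^ (m * s) * cc) / (q ^ (t * s) * q ^ (r * s))
          = 2 ^ s * (q powr real (m * s) / (q powr real (t * s) * q powr real (r * s))) * cc"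
      by (simp only: powr_realpow[OF qp]) simp
    also have "\<dots> \<le> q powr (real r * real s / 64) * (q powr real (m * s) / (q powr real (t * s) * q powr real (r * s))) * cc"
      using p2 ce0 by (intro mult_right_mono) auto
    also have "\<dots> = q powr (real r * real s / 64 + real (m * s) - real (t * s) - real (r * s)) * cc"
    proof -
      have "q powr ((real r * real s / 64 + real (m * s)) - (real (t * s) + real (r * s)))
          = q powr (real r * real s / 64) * q powr real (m * s) / (q powr real (t * s) * q powr real (r * s))"
        by (simp only: powr_diff powr_add)
      moreover have "(real r * real s / 64 + real (m * s)) - (real (t * s) + real (r * s))
          = real r * real s / 64 + real (m * s) - real (t * s) - real (r * s)" by simp
      ultimately show ?thesis by simp
    qed
    finally show ?thesis using A by linarith
  qed
  have tm: "t \<le> m" "s \<le> t" unfolding t_def s_def using m1 m_def by auto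
  have cs: "(s = t) \<or> (s + 1 = t \<and> 9 \<le> m)"
    using nn m1 unfolding s_def e_def t_def m_def by auto
  have E: "5 * real r * real m / 32 \<le> real s * (real r - real m + real t)"
    by (rule expo_ineq[OF _ _ cs]) (use mr m_def t_def in auto)
  have sm: "real r * real s / 64 \<le> real r * real m / 64" using tm by (simp add: mult_left_mono)
  have "real r * real s / 64 + real (m * s) - real (t * s) - real (r * s)
        = real r * real s / 64 - real s * (real r - real m + real t)" by (simp add: algebra_simps)
  also have "\<dots> \<le> - (real r * real m / 8) - real r * real m / 64" using E sm by linarith
  finally have "q powr (real r * real s / 64 + real (m * s) - real (t * s) - real (r * s))
      \<le> q powr (- (real r * real m / 8) - real r * real m / 64)"
    using q2 by (intro powr_mono) auto
  hence "ce \<le> q powr (- (real r * real m / 8) - real r * real m / 64) * cc"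
    using B ce0 by (meson mult_right_mono order_trans)
  thus ?thesis unfolding ce_def cc_def q_def m_def .
qed

lemma geom_le:
  fixes x :: real
  assumes "0 \<le> x" "x < 1"
  shows "(\<Sum>m\<in>{1..r}. x ^ m) \<le> x / (1 - x)"
proof -
  have "(1 - x) * (\<Sum>m\<in>{1..r}. x ^ m) = x - x ^ (r + 1)"
  proof (induction r)
    case (Suc r)
    have "(1-x)*(\<Sum>m\<in>{1..Suc r}. x^m) = (1-x)*(\<Sum>m\<in>{1..r}. x^m) + (1-x)*x^(Suc r)"
      by (simp add: sum.cl_ivl_Suc distrib_left)
    also have "\<dots> = x - x^(r+1) + (1-x)*x^(Suc r)" using Suc by simp
    also have "\<dots> = x - x^(Suc r + 1)" by (simp add: algebra_simps)
    finally show ?case .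
  qed simp
  hence "(1 - x) * (\<Sum>m\<in>{1..r}. x ^ m) \<le> x" using assms by simp
  thus ?thesis using assms by (simp add: field_simps mult.commute)
qed

theorem lemma5p9:
  fixes r :: nat
  assumes "CARD('n) \<ge> 2"
    and "1 \<le> r" and "r \<le> CARD('n) - 1"
  shows "real (card {C \<in> (codes_with_ones r :: ('a::{finite,field} ^ 'n) set set). prop_star r C})
           / real (card (codes_with_ones r :: ('a ^ 'n) set set))
         \<ge> 1 - 4 * real CARD('a) powr (- real r / 64) / (1 - real CARD('a) powr (- real r / 64))"
proof -
  define q where "q = real CARD('a)"
  define N where "N = CARD('n)"
  define x where "x = q powr (- real r / 64)"
  define Codes where "Codes = (codes_with_ones r :: ('a ^ 'n) set set)"
  define cc where "cc = real (card Codes)"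
  define good where "good = {C \<in> Codes. prop_star r C}"
  define bad where "bad = {C \<in> Codes. \<not> prop_star r C}"
  have rN: "r < N" using assms unfolding N_def by linarith
  have q2: "q \<ge> 2" unfolding q_def using card_field_ge2[where 'a='a] by simp
  have x0: "0 < x" unfolding x_def using q2 by simp
  have x1: "x < 1" unfolding x_def using q2 assms by (intro powr_less_one) auto
  have cc0: "cc > 0" unfolding cc_def Codes_def using codes_nonempty[OF rN[unfolded N_def]] by simp
  have finCodes: "finite Codes" by (rule finite_subset[OF _ finite[of UNIV]]) auto
  have goal_eq: "real (card good) / cc = 1 - real (card bad) / cc"
  proof -
    have "good = Codes - bad" unfolding good_def bad_def by auto
    hence "card good = card Codes - card bad" by (simp add: card_Diff_subset bad_def finCodes)
    moreover have "card bad \<le> card Codes" unfolding bad_def by (rule card_mono[OF finCodes]) auto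
    ultimately have "real (card good) = cc - real (card bad)" unfolding cc_def by (simp add: of_nat_diff)
    thus ?thesis using cc0 by (simp add: field_simps)
  qed
  have main: "real (card bad) \<le> x / (1 - x) * cc" if x5: "x < 1/5"
  proof -
    have qr: "2 \<le> q powr (real r / 64)"
    proof -
      have "q powr (real r / 64) = inverse x" unfolding x_def by (simp add: powr_minus)
      moreover have "5 < inverse x" using x5 x0 by (simp add: field_simps)
      ultimately show ?thesis by simp
    qed
    define y where "y = real r / (8 * real N)"
    have Np: "real N > 0" using rN by simp
    have y0: "0 < y" unfolding y_def using assms Np by simp
    have y8: "y < 1/8" unfolding y_def using rN Np by (simp add: field_simps)
    define \<alpha> where "\<alpha> = qentropy_inv q y"
    have A: "0 \<le> \<alpha>" "\<alpha> \<le> 1 - 1/q" "qentropy q \<alpha> = y"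
      using qent_inv[OF q2, of y] y0 y8 unfolding \<alpha>_def by auto
    have a0: "0 < \<alpha>"
    proof (rule ccontr)
      assume "\<not> 0 < \<alpha>" hence "\<alpha> = 0" using A by simp
      thus False using A(3) y0 by (simp add: qent_eq)
    qed
    have a8: "\<alpha> < 1/8" using qent_ge[OF q2 A(1,2)] A(3) y8 by simp
    define Bset where "Bset = {v::'a^'n. real (hweight v) \<le> \<alpha> * real N}"
    have cB: "real (card Bset) \<le> q powr (real r / 8)"
    proof -
      have "real (card Bset) \<le> q powr (qentropy q \<alpha> * real N)"
        unfolding Bset_def q_def N_def using weight_count[where 'a='a and 'n='n, OF a0] A(2) unfolding q_def by simp
      also have "qentropy q \<alpha> * real N = real r / 8" using A(3) Np unfolding y_def by simp
      finally show ?thesis .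
    qed
    define Lm where "Lm m = {b. set b \<subseteq> Bset \<and> length b = m}" for m
    define Ev where "Ev b = {C \<in> Codes. (length b + 1) div 2 \<le> vec.dim (C \<inter> vec.span (set b))}"
      for b :: "('a^'n) list"
    have finLm: "finite (Lm m)" for m
      unfolding Lm_def by (rule finite_lists_length_eq) simp
    have sub: "bad \<subseteq> (\<Union>m\<in>{1..r}. \<Union>b\<in>Lm m. Ev b)"
    proof
      fix C assume C: "C \<in> bad"
      hence CC: "C \<in> Codes" unfolding bad_def by simp
      from C obtain m V where m: "m \<in> {1..r}" and V: "vec.subspace V" "vec.dim V = m"
        "sparse_subspace \<alpha> V" and D: "\<not> real (vec.dim (C \<inter> V)) < real m / 2"
        unfolding bad_def prop_star_def Let_def \<alpha>_def y_def q_def N_def by auto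
      obtain S where S: "V = vec.span S" "\<forall>v\<in>S. real (hweight v) \<le> \<alpha> * real N"
        using V(3) unfolding sparse_subspace_def N_def by blast
      obtain B where B: "B \<subseteq> S" "vec.independent B" "S \<subseteq> vec.span B"
        using vec.maximal_independent_subset by blast
      have spB: "vec.span B = V" using B S(1)
        by (metis subset_antisym vec.span_mono vec.span_span)
      have cardB: "card B = m" using vec.dim_span_eq_card_independent[OF B(2)] spB V(2) by simp
      have finB: "finite B" using B(2) vec.independent_bound_general by blast
      obtain b where b: "set b = B" "distinct b" using finite_distinct_list[OF finB] by blast
      have lb: "length b = m" using b cardB distinct_card by fastforce
      have bL: "b \<in> Lm m" unfolding Lm_def Bset_def using b lb B(1) S(2) by auto
      have "(m + 1) div 2 \<le> vec.dim (C \<inter> V)" using D by linarith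
      hence "C \<in> Ev b" unfolding Ev_def using CC b(1) spB lb by simp
      thus "C \<in> (\<Union>m\<in>{1..r}. \<Union>b\<in>Lm m. Ev b)" using m bL by blast
    qed
    have finEv: "finite (Ev b)" for b unfolding Ev_def using finCodes by simp
    have "card bad \<le> card (\<Union>m\<in>{1..r}. \<Union>b\<in>Lm m. Ev b)"
      by (rule card_mono[OF _ sub]) (use finLm finEv in auto)
    also have "\<dots> \<le> (\<Sum>m\<in>{1..r}. card (\<Union>b\<in>Lm m. Ev b))" by (rule card_UN_le) simp
    also have "\<dots> \<le> (\<Sum>m\<in>{1..r}. \<Sum>b\<in>Lm m. card (Ev b))"
      by (rule sum_mono) (rule card_UN_le[OF finLm])
    finally have "real (card bad) \<le> (\<Sum>m\<in>{1..r}. \<Sum>b\<in>Lm m. real (card (Ev b)))"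
      by (metis (mono_tags, lifting) of_nat_le_iff of_nat_sum sum.cong)
    also have "\<dots> \<le> (\<Sum>m\<in>{1..r}. x ^ m * cc)"
    proof (rule sum_mono)
      fix m assume m: "m \<in> {1..r}"
      have "(\<Sum>b\<in>Lm m. real (card (Ev b)))
            \<le> (\<Sum>b\<in>Lm m. q powr (- (real r * real m / 8) - real r * real m / 64) * cc)"
      proof (rule sum_mono)
        fix b assume b: "b \<in> Lm m"
        have lb: "length b = m" "set b \<subseteq> Bset" using b unfolding Lm_def by auto
        have nn: "9 \<le> length b" if "ones \<in> vec.span (set b)"
          using nine[OF _ A(1) a8 that] lb(2) unfolding Bset_def N_def by blast
        show "real (card (Ev b)) \<le> q powr (- (real r * real m / 8) - real r * real m / 64) * cc"
          using perb[OF rN[unfolded N_def], of b] nn lb m qr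
          unfolding Ev_def Codes_def cc_def q_def by auto
      qed
      also have "\<dots> = real (card (Lm m)) * (q powr (- (real r * real m / 8) - real r * real m / 64) * cc)"
        by simp
      also have "\<dots> \<le> q powr (real r * real m / 8) * (q powr (- (real r * real m / 8) - real r * real m / 64) * cc)"
      proof (rule mult_right_mono)
        have "card (Lm m) = card Bset ^ m" unfolding Lm_def by (rule card_lists_length_eq) simp
        hence "real (card (Lm m)) = real (card Bset) ^ m" by simp
        also have "\<dots> \<le> (q powr (real r / 8)) ^ m" by (rule power_mono[OF cB]) simp
        also have "\<dots> = q powr (real r * real m / 8)" using q2
          by (simp add: powr_realpow[symmetric] powr_powr)
        finally show "real (card (Lm m)) \<le> q powr (real r * real m / 8)" .
      qed (use cc0 in simp)
      also have "\<dots> = q powr (- real r / 64 * real m) * cc"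
      proof -
        have "q powr (real r * real m / 8) * q powr (- (real r * real m / 8) - real r * real m / 64)
            = q powr (real r * real m / 8 + (- (real r * real m / 8) - real r * real m / 64))"
          by (simp only: powr_add)
        also have "real r * real m / 8 + (- (real r * real m / 8) - real r * real m / 64) = - real r / 64 * real m"
          by simp
        finally show ?thesis by (simp add: mult.assoc[symmetric])
      qed
      also have "\<dots> = x ^ m * cc" unfolding x_def using q2
        by (simp add: powr_realpow[symmetric] powr_powr)
      finally show "(\<Sum>b\<in>Lm m. real (card (Ev b))) \<le> x ^ m * cc" .
    qed
    also have "\<dots> = (\<Sum>m\<in>{1..r}. x ^ m) * cc" by (simp add: sum_distrib_right)
    also have "\<dots> \<le> x / (1 - x) * cc" using geom_le[OF _ x1, of r] x0 cc0 by (intro mult_right_mono) auto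
    finally show ?thesis .
  qed
  have R: "1 - 4 * x / (1 - x) \<le> real (card good) / cc"
  proof (cases "x < 1/5")
    case True
    have "real (card bad) / cc \<le> x / (1 - x)" using main[OF True] cc0 by (simp add: field_simps)
    moreover have "x / (1 - x) \<le> 4 * x / (1 - x)" using x0 x1 by (simp add: field_simps)
    ultimately show ?thesis using goal_eq by linarith
  next
    case False
    have "1 \<le> 4 * x / (1 - x)" using False x1 by (simp add: field_simps)
    moreover have "0 \<le> real (card good) / cc" using cc0 by simp
    ultimately show ?thesis by linarith
  qed
  thus ?thesis unfolding x_def q_def good_def cc_def Codes_def .
qed

end
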